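(* Let $X$ be a $T_1$ space and $\mathcal{P}$ an ideal of closed subsets of $X$ containing every singleton subset of $X$. Then: (1) a nonzero ideal $I$ of $C(X)_\mathcal{P}$ is minimal if and only if there exists $\alpha\in X$ with $I=\langle\chi_{\{\alpha\}}\rangle$, if and only if $|Z_\mathcal{P}[I]|=2$; (2) the socle of $C(X)_\mathcal{P}$ consists exactly of the functions in $C(X)_\mathcal{P}$ that vanish everywhere except on a finite set; (3) the socle of $C(X)_\mathcal{P}$ is an essential ideal and is free.
   Context: An ideal of closed subsets of $X$ is a family $\mathcal{P}$ of closed subsets closed under finite unions and under passing to closed subsets. $D_f$ is the set of discontinuity points of $f\in\mathbb{R}^X$; $C(X)_\mathcal{P}=\{f\in\mathbb{R}^X\colon\overline{D_f}\in\mathcal{P}\}$, a commutative ring with pointwise operations. $\chi_A$ denotes the characteristic function of $A$. For $f\in C(X)_\mathcal{P}$, $Z_\mathcal{P}(f)=\{x\colon f(x)=0\}$ and $Z_\mathcal{P}[I]=\{Z_\mathcal{P}(f)\colon f\in I\}$. The socle is the sum of all minimal ideals. An ideal is essential if it meets every nonzero ideal nontrivially; an ideal $I$ is free if $\bigcap Z_\mathcal{P}[I]=\emptyset$. *)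

theory Defs
  imports "HOL-Analysis.Analysis"
begin

text \<open>The space X is the whole (type-class) T1 space UNIV :: 'a set.\<close>

definition closed_ideal :: "'a::topological_space set set \<Rightarrow> bool" where
  "closed_ideal P \<longleftrightarrow> (\<forall>A\<in>P. closed A)
     \<and> {} \<in> P
     \<and> (\<forall>A\<in>P. \<forall>B\<in>P. A \<union> B \<in> P)
     \<and> (\<forall>A\<in>P. \<forall>B. closed B \<and> B \<subseteq> A \<longrightarrow> B \<in> P)"

definition discont :: "('a::topological_space \<Rightarrow> real) \<Rightarrow> 'a set" where
  "discont f = {x. \<not> (f \<longlongrightarrow> f x) (at x)}"

definition CP :: "'a::topological_space set set \<Rightarrow> ('a \<Rightarrow> real) set" where
  "CP P = {f. closure (discont f) \<in> P}"

definition is_ideal :: "'a::topological_space set set \<Rightarrow> ('a \<Rightarrow> real) set \<Rightarrow> bool" where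
  "is_ideal P I \<longleftrightarrow> I \<subseteq> CP P \<and> (\<lambda>x. 0) \<in> I
     \<and> (\<forall>f\<in>I. \<forall>g\<in>I. (\<lambda>x. f x + g x) \<in> I)
     \<and> (\<forall>f\<in>I. (\<lambda>x. - f x) \<in> I)
     \<and> (\<forall>r\<in>CP P. \<forall>f\<in>I. (\<lambda>x. r x * f x) \<in> I)"

definition minimal_ideal :: "'a::topological_space set set \<Rightarrow> ('a \<Rightarrow> real) set \<Rightarrow> bool" where
  "minimal_ideal P I \<longleftrightarrow> is_ideal P I \<and> I \<noteq> {\<lambda>x. 0}
     \<and> (\<forall>J. is_ideal P J \<and> J \<subseteq> I \<longrightarrow> J = {\<lambda>x. 0} \<or> J = I)"

definition gen_ideal :: "'a::topological_space set set \<Rightarrow> ('a \<Rightarrow> real) set \<Rightarrow> ('a \<Rightarrow> real) set" where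
  "gen_ideal P S = \<Inter>{J. is_ideal P J \<and> S \<subseteq> J}"

definition chi :: "'a set \<Rightarrow> 'a \<Rightarrow> real" where
  "chi A = (\<lambda>x. if x \<in> A then 1 else 0)"

definition ZP :: "('a \<Rightarrow> real) \<Rightarrow> 'a set" where
  "ZP f = {x. f x = 0}"

definition socle :: "'a::topological_space set set \<Rightarrow> ('a \<Rightarrow> real) set" where
  "socle P = gen_ideal P (\<Union>{I. minimal_ideal P I})"

definition essential_ideal :: "'a::topological_space set set \<Rightarrow> ('a \<Rightarrow> real) set \<Rightarrow> bool" where
  "essential_ideal P E \<longleftrightarrow> is_ideal P E \<and>
     (\<forall>J. is_ideal P J \<and> J \<noteq> {\<lambda>x. 0} \<longrightarrow> (\<exists>f\<in>E \<inter> J. f \<noteq> (\<lambda>x. 0)))"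

definition free_ideal :: "('a \<Rightarrow> real) set \<Rightarrow> bool" where
  "free_ideal I \<longleftrightarrow> \<Inter>(ZP ` I) = {}"

end

theory Submission
  imports Defs
begin

lemma finsupp_CP:
  fixes P :: "'a::t1_space set set"
  assumes P: "closed_ideal P" and sing: "\<forall>x. {x} \<in> P"
    and fin: "finite {x. f x \<noteq> 0}"
  shows "f \<in> CP P"
proof -
  let ?S = "{x. f x \<noteq> 0}"
  have SP: "?S \<in> P"
  proof -
    have "\<And>T. finite T \<Longrightarrow> T \<in> P"
    proof -
      fix T :: "'a set" assume "finite T"
      then show "T \<in> P"
      proof (induction T rule: finite_induct)
        case empty then show ?case using P by (simp add: closed_ideal_def)
      next
        case (insert x F)
        have "insert x F = {x} \<union> F" by auto
        then show ?case using P insert sing unfolding closed_ideal_def by metis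
      qed
    qed
    then show ?thesis using fin by blast
  qed
  have clS: "closed ?S" using fin finite_imp_closed by blast
  have "discont f \<subseteq> ?S"
  proof
    fix x assume x: "x \<in> discont f"
    show "x \<in> ?S"
    proof (rule ccontr)
      assume nx: "x \<notin> ?S"
      have "eventually (\<lambda>y. f y = f x) (at x)"
        unfolding eventually_at_topological
        using clS nx by (intro exI[of _ "- ?S"]) (auto simp: open_Compl)
      then have "(f \<longlongrightarrow> f x) (at x)" by (rule tendsto_eventually)
      then show False using x by (simp add: discont_def)
    qed
  qed
  then have "closure (discont f) \<subseteq> ?S" using clS closure_minimal by blast
  then show ?thesis using P SP unfolding CP_def closed_ideal_def by blast
qed

lemma const_CP:
  assumes P: "closed_ideal P"
  shows "(\<lambda>x. c) \<in> CP P"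
proof -
  have "discont (\<lambda>x::'a. c) = {}" by (simp add: discont_def)
  then show ?thesis using P by (simp add: CP_def closed_ideal_def)
qed

lemma ideal_add: "is_ideal P J \<Longrightarrow> f \<in> J \<Longrightarrow> g \<in> J \<Longrightarrow> (\<lambda>x. f x + g x) \<in> J"
  unfolding is_ideal_def by blast
lemma ideal_mult: "is_ideal P J \<Longrightarrow> r \<in> CP P \<Longrightarrow> f \<in> J \<Longrightarrow> (\<lambda>x. r x * f x) \<in> J"
  unfolding is_ideal_def by blast
lemma ideal_zero: "is_ideal P J \<Longrightarrow> (\<lambda>x. 0) \<in> J"
  unfolding is_ideal_def by blast

lemma gen_eq:
  assumes "is_ideal P J" "S \<subseteq> J" "\<And>J'. is_ideal P J' \<Longrightarrow> S \<subseteq> J' \<Longrightarrow> J \<subseteq> J'"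
  shows "gen_ideal P S = J"
  using assms unfolding gen_ideal_def by blast

lemma chi_mult_in:
  fixes P :: "'a::t1_space set set"
  assumes P: "closed_ideal P" and sing: "\<forall>x. {x} \<in> P"
    and J: "is_ideal P J" and f: "f \<in> J"
  shows "(\<lambda>x. f a * chi {a} x) \<in> J"
proof -
  have "chi {a} \<in> CP P"
    by (rule finsupp_CP[OF P sing]) (auto simp: chi_def)
  then have "(\<lambda>x. chi {a} x * f x) \<in> J" by (rule ideal_mult[OF J _ f])
  moreover have "(\<lambda>x. chi {a} x * f x) = (\<lambda>x. f a * chi {a} x)"
    by (auto simp: chi_def)
  ultimately show ?thesis by simp
qed

lemma const_mult_in:
  assumes P: "closed_ideal P" and J: "is_ideal P J" and f: "f \<in> J"
  shows "(\<lambda>x. c * f x) \<in> J"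
  using ideal_mult[OF J const_CP[OF P, of c] f] .

lemma chi_in:
  fixes P :: "'a::t1_space set set"
  assumes P: "closed_ideal P" and sing: "\<forall>x. {x} \<in> P"
    and J: "is_ideal P J" and f: "f \<in> J" and fa: "f a \<noteq> 0"
  shows "chi {a} \<in> J"
proof -
  have "(\<lambda>x. (1 / f a) * (f a * chi {a} x)) \<in> J"
    by (rule const_mult_in[OF P J chi_mult_in[OF P sing J f]])
  moreover have "(\<lambda>x. (1 / f a) * (f a * chi {a} x)) = chi {a}"
    using fa by (simp add: fun_eq_iff)
  ultimately show ?thesis by simp
qed

lemma finsupp_in:
  fixes P :: "'a::t1_space set set"
  assumes P: "closed_ideal P" and J: "is_ideal P J" and chis: "\<forall>a. chi {a} \<in> J"
    and fin: "finite {x. f x \<noteq> 0}"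
  shows "f \<in> J"
proof -
  have "\<And>S. finite S \<Longrightarrow> \<forall>f. {x. f x \<noteq> 0} \<subseteq> S \<longrightarrow> f \<in> J"
  proof -
    fix S :: "'a set" assume "finite S"
    then show "\<forall>f. {x. f x \<noteq> 0} \<subseteq> S \<longrightarrow> f \<in> J"
    proof (induction S rule: finite_induct)
      case empty
      show ?case
      proof (intro allI impI)
        fix f :: "'a \<Rightarrow> real" assume "{x. f x \<noteq> 0} \<subseteq> {}"
        then have "f = (\<lambda>x. 0)" by auto
        then show "f \<in> J" using J by (simp add: is_ideal_def)
      qed
    next
      case (insert a S)
      show ?case
      proof (intro allI impI)
        fix f :: "'a \<Rightarrow> real" assume sf: "{x. f x \<noteq> 0} \<subseteq> insert a S"
        define g where "g = (\<lambda>x. f x + - (f a * chi {a} x))"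
        have "{x. g x \<noteq> 0} \<subseteq> S" using sf by (auto simp: g_def chi_def)
        then have g: "g \<in> J" using insert by blast
        have h: "(\<lambda>x. f a * chi {a} x) \<in> J"
          using const_mult_in[OF P J chis[rule_format, of a]] .
        have "(\<lambda>x. g x + f a * chi {a} x) \<in> J" using ideal_add[OF J g h] .
        moreover have "(\<lambda>x. g x + f a * chi {a} x) = f" by (simp add: g_def fun_eq_iff)
        ultimately show "f \<in> J" by simp
      qed
    qed
  qed
  then show ?thesis using fin by blast
qed

definition Ca :: "'a \<Rightarrow> ('a \<Rightarrow> real) set" where
  "Ca a = {f. \<exists>c. f = (\<lambda>x. c * chi {a} x)}"

lemma Ca_ideal:
  fixes P :: "'a::t1_space set set"
  assumes P: "closed_ideal P" and sing: "\<forall>x. {x} \<in> P"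
  shows "is_ideal P (Ca a)"
  unfolding is_ideal_def
proof (intro conjI ballI)
  show "Ca a \<subseteq> CP P"
  proof
    fix f assume "f \<in> Ca a"
    then have "{x. f x \<noteq> 0} \<subseteq> {a}" by (auto simp: Ca_def chi_def split: if_splits)
    then have "finite {x. f x \<noteq> 0}" using finite_subset by blast
    then show "f \<in> CP P" by (rule finsupp_CP[OF P sing])
  qed
  show "(\<lambda>x. 0) \<in> Ca a" unfolding Ca_def by (intro CollectI exI[of _ 0]) simp
  fix f assume "f \<in> Ca a"
  then obtain c where c: "f = (\<lambda>x. c * chi {a} x)" by (auto simp: Ca_def)
  show "(\<lambda>x. - f x) \<in> Ca a" unfolding Ca_def c by (intro CollectI exI[of _ "-c"]) simp
  { fix g assume "g \<in> Ca a"
    then obtain d where d: "g = (\<lambda>x. d * chi {a} x)" by (auto simp: Ca_def)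
    show "(\<lambda>x. f x + g x) \<in> Ca a" unfolding Ca_def c d
      by (intro CollectI exI[of _ "c+d"]) (simp add: algebra_simps) }
  { fix r assume "r \<in> CP P"
    show "(\<lambda>x. r x * f x) \<in> Ca a" unfolding Ca_def c
      by (intro CollectI exI[of _ "r a * c"]) (auto simp: chi_def) }
qed

lemma chi_Ca: "chi {a} \<in> Ca a"
  unfolding Ca_def by (intro CollectI exI[of _ 1]) simp

lemma Ca_sub:
  fixes P :: "'a::t1_space set set"
  assumes P: "closed_ideal P" and J: "is_ideal P J" and c: "chi {a} \<in> J"
  shows "Ca a \<subseteq> J"
proof
  fix g assume "g \<in> Ca a"
  then obtain c where "g = (\<lambda>x. c * chi {a} x)" unfolding Ca_def by blast
  then show "g \<in> J" using const_mult_in[OF P J c, of c] by simp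
qed

lemma gen_Ca:
  fixes P :: "'a::t1_space set set"
  assumes P: "closed_ideal P" and sing: "\<forall>x. {x} \<in> P"
  shows "gen_ideal P {chi {a}} = Ca a"
proof (rule gen_eq)
  show "is_ideal P (Ca a)" by (rule Ca_ideal[OF P sing])
  show "{chi {a}} \<subseteq> Ca a" using chi_Ca by simp
  fix J assume J: "is_ideal P J" and "{chi {a}} \<subseteq> J"
  then have "chi {a} \<in> J" by simp
  then show "Ca a \<subseteq> J" by (rule Ca_sub[OF P J])
qed

lemma Ca_nonzero: "Ca a \<noteq> {\<lambda>x. 0}"
proof
  assume "Ca a = {\<lambda>x. 0}"
  then have "chi {a} \<in> {\<lambda>x. 0}" using chi_Ca[of a] by (simp only:)
  then have "chi {a} = (\<lambda>x. 0)" by (rule singletonD)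
  then have "chi {a} a = 0" by simp
  then show False by (simp add: chi_def)
qed

lemma nonzero_elem:
  assumes "is_ideal P I" "I \<noteq> {\<lambda>x. 0}"
  obtains f a where "f \<in> I" "f a \<noteq> 0"
proof -
  have "(\<lambda>x. 0) \<in> I" using assms by (simp add: is_ideal_def)
  then obtain f where "f \<in> I" "f \<noteq> (\<lambda>x. 0)" using assms by blast
  have "\<exists>a. f a \<noteq> 0"
  proof (rule ccontr)
    assume "\<not> (\<exists>a. f a \<noteq> 0)"
    then have "f = (\<lambda>x. 0)" by (simp add: fun_eq_iff)
    then show False using \<open>f \<noteq> (\<lambda>x. 0)\<close> by simp
  qed
  then obtain a where "f a \<noteq> 0" by blast
  then show ?thesis using that \<open>f \<in> I\<close> by blast
qed

lemma Ca_minimal: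
  fixes P :: "'a::t1_space set set"
  assumes P: "closed_ideal P" and sing: "\<forall>x. {x} \<in> P"
  shows "minimal_ideal P (Ca a)"
  unfolding minimal_ideal_def
proof (intro conjI allI impI)
  show "is_ideal P (Ca a)" by (rule Ca_ideal[OF P sing])
  show "Ca a \<noteq> {\<lambda>x. 0}" by (rule Ca_nonzero)
  fix J assume J: "is_ideal P J \<and> J \<subseteq> Ca a"
  have J1: "is_ideal P J" and J2: "J \<subseteq> Ca a" using J by simp_all
  show "J = {\<lambda>x. 0} \<or> J = Ca a"
  proof (cases "J = {\<lambda>x. 0}")
    case False
    obtain f b where f: "f \<in> J" "f b \<noteq> 0" using nonzero_elem[OF J1 False] by blast
    have "f \<in> Ca a" using J2 f(1) by (rule subsetD)
    then obtain c where c: "f = (\<lambda>x. c * chi {a} x)" unfolding Ca_def by blast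
    have "b = a"
    proof (rule ccontr)
      assume "b \<noteq> a" then have "f b = 0" by (simp add: c chi_def)
      then show False using f(2) by simp
    qed
    then have "chi {a} \<in> J" using chi_in[OF P sing J1 f(1)] f(2) by simp
    then have "Ca a \<subseteq> J" by (rule Ca_sub[OF P J1])
    then show ?thesis using J2 by (simp add: subset_antisym)
  qed simp
qed

lemma minimal_iff:
  fixes P :: "'a::t1_space set set"
  assumes P: "closed_ideal P" and sing: "\<forall>x. {x} \<in> P"
    and I: "is_ideal P I" and nz: "I \<noteq> {\<lambda>x. 0}"
  shows "minimal_ideal P I \<longleftrightarrow> (\<exists>a. I = Ca a)"
proof
  assume m: "minimal_ideal P I"
  have mm: "\<forall>J. is_ideal P J \<and> J \<subseteq> I \<longrightarrow> J = {\<lambda>x. 0} \<or> J = I"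
    using m unfolding minimal_ideal_def by simp
  obtain f a where f: "f \<in> I" "f a \<noteq> 0" using nonzero_elem[OF I nz] by blast
  have "chi {a} \<in> I" by (rule chi_in[OF P sing I f])
  then have "Ca a \<subseteq> I" by (rule Ca_sub[OF P I])
  then have "Ca a = {\<lambda>x. 0} \<or> Ca a = I" using mm Ca_ideal[OF P sing, of a] by simp
  then have "Ca a = I" using Ca_nonzero[of a] by simp
  then show "\<exists>a. I = Ca a" by (intro exI[of _ a]) simp
next
  assume "\<exists>a. I = Ca a"
  then obtain a where "I = Ca a" by blast
  then show "minimal_ideal P I" using Ca_minimal[OF P sing, of a] by simp
qed

lemma ZP_Ca: "ZP ` Ca a = {UNIV, - {a}}"
proof
  show "ZP ` Ca a \<subseteq> {UNIV, - {a}}"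
  proof
    fix Z assume "Z \<in> ZP ` Ca a"
    then obtain c where "Z = ZP (\<lambda>x. c * chi {a} x)" by (auto simp: Ca_def)
    then show "Z \<in> {UNIV, - {a}}" by (cases "c = 0") (auto simp: ZP_def chi_def)
  qed
  have e1: "ZP (\<lambda>x. 0 * chi {a} x) = UNIV" by (simp add: ZP_def)
  have e2: "ZP (\<lambda>x. 1 * chi {a} x) = - {a}" by (auto simp: ZP_def chi_def)
  have m1: "(\<lambda>x. 0 * chi {a} x) \<in> Ca a" unfolding Ca_def by blast
  have m2: "(\<lambda>x. 1 * chi {a} x) \<in> Ca a" unfolding Ca_def by blast
  have "UNIV \<in> ZP ` Ca a" using imageI[OF m1, of ZP] unfolding e1 .
  moreover have "- {a} \<in> ZP ` Ca a" using imageI[OF m2, of ZP] unfolding e2 .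
  ultimately show "{UNIV, - {a}} \<subseteq> ZP ` Ca a" by simp
qed

lemma card_iff:
  fixes P :: "'a::t1_space set set"
  assumes P: "closed_ideal P" and sing: "\<forall>x. {x} \<in> P"
    and I: "is_ideal P I" and nz: "I \<noteq> {\<lambda>x. 0}"
  shows "(\<exists>a. I = Ca a) \<longleftrightarrow> card (ZP ` I) = 2"
proof
  assume "\<exists>a. I = Ca a"
  then obtain a where "I = Ca a" by blast
  moreover have "UNIV \<noteq> - {a}" by auto
  ultimately show "card (ZP ` I) = 2" by (simp add: ZP_Ca)
next
  assume c2: "card (ZP ` I) = 2"
  then have finZ: "finite (ZP ` I)" by (intro card_ge_0_finite) simp
  obtain f a where f: "f \<in> I" "f a \<noteq> 0" using nonzero_elem[OF I nz] by blast
  have ca: "chi {a} \<in> I" by (rule chi_in[OF P sing I f])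
  have CaI: "Ca a \<subseteq> I" by (rule Ca_sub[OF P I ca])
  have "I \<subseteq> Ca a"
  proof
    fix g assume g: "g \<in> I"
    have "\<forall>b. b \<noteq> a \<longrightarrow> g b = 0"
    proof (intro allI impI, rule ccontr)
      fix b assume ba: "b \<noteq> a" and gb: "g b \<noteq> 0"
      have cb: "chi {b} \<in> I" by (rule chi_in[OF P sing I g gb])
      have z0: "(\<lambda>x. 0) \<in> I" using I by (simp add: is_ideal_def)
      have e0: "ZP (\<lambda>x. 0::real) = UNIV" by (simp add: ZP_def)
      have ea: "ZP (chi {a}) = - {a}" by (auto simp: ZP_def chi_def)
      have eb: "ZP (chi {b}) = - {b}" by (auto simp: ZP_def chi_def)
      have "UNIV \<in> ZP ` I" using imageI[OF z0, of ZP] unfolding e0 .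
      moreover have "- {a} \<in> ZP ` I" using imageI[OF ca, of ZP] unfolding ea .
      moreover have "- {b} \<in> ZP ` I" using imageI[OF cb, of ZP] unfolding eb .
      ultimately have sub: "{UNIV, - {a}, - {b}} \<subseteq> ZP ` I" by simp
      have d1: "(UNIV::'a set) \<noteq> - {a}" "(UNIV::'a set) \<noteq> - {b}" "- {a} \<noteq> - {b}" using ba by auto
      have "card {UNIV, - {a}, - {b::'a}} = 3" using d1 by simp
      then have "3 \<le> card (ZP ` I)" using card_mono[OF finZ sub] by simp
      then show False using c2 by simp
    qed
    then have "g = (\<lambda>x. g a * chi {a} x)" by (auto simp: chi_def)
    then show "g \<in> Ca a" unfolding Ca_def by blast
  qed
  then show "\<exists>a. I = Ca a" using CaI by blast
qed

theorem theorem5p8: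
  fixes P :: "'a::t1_space set set"
  assumes "closed_ideal P"
    and "\<forall>x. {x} \<in> P"
  shows "(\<forall>I. is_ideal P I \<and> I \<noteq> {\<lambda>x. 0} \<longrightarrow>
            (minimal_ideal P I \<longleftrightarrow> (\<exists>a. I = gen_ideal P {chi {a}}))
          \<and> ((\<exists>a. I = gen_ideal P {chi {a}}) \<longleftrightarrow> card (ZP ` I) = 2))
       \<and> socle P = {f \<in> CP P. finite {x. f x \<noteq> 0}}
       \<and> essential_ideal P (socle P)
       \<and> free_ideal (socle P)"
proof -
  note P = assms(1) and sing = assms(2)
  let ?F = "{f \<in> CP P. finite {x. f x \<noteq> 0}}"
  have part1: "\<forall>I. is_ideal P I \<and> I \<noteq> {\<lambda>x. 0} \<longrightarrow>
            (minimal_ideal P I \<longleftrightarrow> (\<exists>a. I = gen_ideal P {chi {a}}))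
          \<and> ((\<exists>a. I = gen_ideal P {chi {a}}) \<longleftrightarrow> card (ZP ` I) = 2)"
  proof (intro allI impI)
    fix I assume I: "is_ideal P I \<and> I \<noteq> {\<lambda>x. 0}"
    have I1: "is_ideal P I" and I2: "I \<noteq> {\<lambda>x. 0}" using I by simp_all
    have g: "(\<exists>a. I = gen_ideal P {chi {a}}) \<longleftrightarrow> (\<exists>a. I = Ca a)"
      using gen_Ca[OF P sing] by simp
    show "(minimal_ideal P I \<longleftrightarrow> (\<exists>a. I = gen_ideal P {chi {a}}))
          \<and> ((\<exists>a. I = gen_ideal P {chi {a}}) \<longleftrightarrow> card (ZP ` I) = 2)"
      unfolding g using minimal_iff[OF P sing I1 I2] card_iff[OF P sing I1 I2] by simp
  qed
  have Fideal: "is_ideal P ?F"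
    unfolding is_ideal_def
  proof (intro conjI ballI)
    show "?F \<subseteq> CP P" by blast
    show "(\<lambda>x. 0) \<in> ?F" using finsupp_CP[OF P sing, of "\<lambda>x. 0"] by simp
    fix f assume f: "f \<in> ?F"
    show "(\<lambda>x. - f x) \<in> ?F" using f finsupp_CP[OF P sing, of "\<lambda>x. - f x"] by simp
    { fix g assume g: "g \<in> ?F"
      have "{x. f x + g x \<noteq> 0} \<subseteq> {x. f x \<noteq> 0} \<union> {x. g x \<noteq> 0}" by auto
      then have "finite {x. f x + g x \<noteq> 0}" using f g finite_subset by blast
      then show "(\<lambda>x. f x + g x) \<in> ?F" using finsupp_CP[OF P sing] by auto }
    { fix r assume "r \<in> CP P"
      have "{x. r x * f x \<noteq> 0} \<subseteq> {x. f x \<noteq> 0}" by auto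
      then have "finite {x. r x * f x \<noteq> 0}" using f finite_subset by blast
      then show "(\<lambda>x. r x * f x) \<in> ?F" using finsupp_CP[OF P sing] by auto }
  qed
  have socF: "socle P = ?F"
    unfolding socle_def
  proof (rule gen_eq)
    show "is_ideal P ?F" by (rule Fideal)
    show "\<Union>{I. minimal_ideal P I} \<subseteq> ?F"
    proof
      fix f assume "f \<in> \<Union>{I. minimal_ideal P I}"
      then obtain I where I: "minimal_ideal P I" "f \<in> I" by blast
      have I1: "is_ideal P I" and I2: "I \<noteq> {\<lambda>x. 0}" using I(1) unfolding minimal_ideal_def by simp_all
      obtain a where "I = Ca a" using minimal_iff[OF P sing I1 I2] I(1) by blast
      then have "{x. f x \<noteq> 0} \<subseteq> {a}" using I by (auto simp: Ca_def chi_def split: if_splits)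
      then have "finite {x. f x \<noteq> 0}" using finite_subset by blast
      then show "f \<in> ?F" using finsupp_CP[OF P sing] by auto
    qed
    fix J assume J: "is_ideal P J" and sub: "\<Union>{I. minimal_ideal P I} \<subseteq> J"
    have "chi {a} \<in> \<Union>{I. minimal_ideal P I}" for a
      by (rule UnionI[of "Ca a"]) (simp_all add: chi_Ca Ca_minimal[OF P sing])
    then have "\<forall>a. chi {a} \<in> J" using sub by blast
    then show "?F \<subseteq> J" using finsupp_in[OF P J] by blast
  qed
  have chiF: "chi {a} \<in> ?F" for a
    using finsupp_CP[OF P sing, of "chi {a}"] by (auto simp: chi_def)
  have ess: "essential_ideal P ?F"
    unfolding essential_ideal_def
  proof (intro conjI allI impI)
    show "is_ideal P ?F" by (rule Fideal)
    fix J assume J: "is_ideal P J \<and> J \<noteq> {\<lambda>x. 0}"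
    have J1: "is_ideal P J" and J2: "J \<noteq> {\<lambda>x. 0}" using J by simp_all
    obtain f a where f: "f \<in> J" "f a \<noteq> 0" using nonzero_elem[OF J1 J2] by blast
    have "chi {a} \<in> J" using chi_in[OF P sing J1 f] .
    moreover have "chi {a} \<noteq> (\<lambda>x. 0)"
    proof
      assume "chi {a} = (\<lambda>x. 0)"
      then have "chi {a} a = 0" by simp
      then show False by (simp add: chi_def)
    qed
    ultimately show "\<exists>f\<in>?F \<inter> J. f \<noteq> (\<lambda>x. 0)" using chiF by blast
  qed
  have free: "free_ideal ?F"
    unfolding free_ideal_def
  proof -
    have "x \<notin> \<Inter>(ZP ` ?F)" for x
      using chiF[of x] by (auto simp: ZP_def chi_def)
    then show "\<Inter>(ZP ` ?F) = {}" by blast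
  qed
  show ?thesis using part1 socF ess free by simp
qed

end
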